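(* Let $N\ge 2$, $p\ge 2$, $0<r_0<R_0\le\infty$, $\Omega=B]r_0,R_0[$, and let $V\in C(\Omega)$ with $V\ge 0$. Assume condition $( * )$ holds. Let $u$ be a positive radial strictly monotone decreasing $C^2$-subsolution of $-\Delta_p w-V|w|^{p-2}w=0$ in $\Omega$, and assume there exists a positive radial strictly monotone decreasing $C^2$-supersolution $v$ of this equation such that $u$ is monotonically smaller than $v$. Then for every positive (not necessarily radial or decreasing) $C^2$-supersolution $w$ of the equation there exists $C>0$ such that $u(x)\le C\,w(x)$ for all $x\in B[r_0,R_0[$.
   Context: $\Delta_p w=\nabla\cdot(|\nabla w|^{p-2}\nabla w)$. $B]r_0,R_0[=\{x\in\mathbb{R}^N: r_0<|x|<R_0\}$, $B[r_0,R_0[=\{x: r_0\le|x|<R_0\}$. A $C^2$-subsolution (resp. supersolution) in $\Omega$ is $w\in C^2(B[r_0,R_0[)$ with $-\Delta_p w-V|w|^{p-2}w\le 0$ (resp. $\ge0$) pointwise in $\Omega$. Radial functions $w(x)=\phi(|x|)$ are identified with $\phi$, $w'=\phi'$; strictly monotone decreasing means $w'(r)<0$ for all $r\in[r_0,R_0[$. For positive radial $C^1$ functions $u,v$ on $B[r_0,R_0[$: $u$ is smaller than $v$ if $u(r)=o(v(r))$ as $r\to R_0$; $u$ is monotonically smaller than $v$ if it is smaller than $v$ and there is $r_1\in[r_0,R_0[$ such that $u/v$ is monotone non-increasing on $[r_1,R_0[$. Condition $( * )$: there exists $\varphi\in C^2(\Omega)$, $\varphi>0$, with $-\Delta_p\varphi-V\varphi^{p-1}\ge0$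 in $\Omega$ and not identically zero. *)

theory Defs
  imports "HOL-Analysis.Analysis" "HOL-Library.Landau_Symbols"
begin

definition grad :: "('a::euclidean_space \<Rightarrow> real) \<Rightarrow> 'a \<Rightarrow> 'a" where
  "grad f x = (\<Sum>b\<in>Basis. frechet_derivative f (at x) b *\<^sub>R b)"

definition divg :: "('a::euclidean_space \<Rightarrow> 'a) \<Rightarrow> 'a \<Rightarrow> real" where
  "divg F x = (\<Sum>b\<in>Basis. frechet_derivative F (at x) b \<bullet> b)"

definition ppow_vec :: "real \<Rightarrow> 'a::euclidean_space \<Rightarrow> 'a" where
  "ppow_vec p y = (if y = 0 then 0 else norm y powr (p - 2) *\<^sub>R y)"

definition ppow :: "real \<Rightarrow> real \<Rightarrow> real" where
  "ppow p t = (if t = 0 then 0 else \<bar>t\<bar> powr (p - 2) * t)"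

definition plap :: "real \<Rightarrow> ('a::euclidean_space \<Rightarrow> real) \<Rightarrow> 'a \<Rightarrow> real" where
  "plap p w x = divg (\<lambda>y. ppow_vec p (grad w y)) x"

definition C2_open :: "'a::euclidean_space set \<Rightarrow> ('a \<Rightarrow> real) \<Rightarrow> bool" where
  "C2_open U f \<longleftrightarrow> open U \<and> (\<forall>x\<in>U. f differentiable (at x))
     \<and> (\<forall>x\<in>U. grad f differentiable (at x))
     \<and> (\<forall>b\<in>Basis. continuous_on U (\<lambda>x. frechet_derivative (grad f) (at x) b))"

definition C2_on :: "'a::euclidean_space set \<Rightarrow> ('a \<Rightarrow> real) \<Rightarrow> bool" where
  "C2_on S f \<longleftrightarrow> (\<exists>U. S \<subseteq> U \<and> C2_open U f)"

definition annulus_open :: "real \<Rightarrow> ereal \<Rightarrow> 'a::euclidean_space set" where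
  "annulus_open r0 R0 = {x. r0 < norm x \<and> ereal (norm x) < R0}"

definition annulus_co :: "real \<Rightarrow> ereal \<Rightarrow> 'a::euclidean_space set" where
  "annulus_co r0 R0 = {x. r0 \<le> norm x \<and> ereal (norm x) < R0}"

definition radii :: "real \<Rightarrow> ereal \<Rightarrow> real set" where
  "radii r0 R0 = {r. r0 \<le> r \<and> ereal r < R0}"

definition to_R0 :: "ereal \<Rightarrow> real filter" where
  "to_R0 R0 = (if R0 = \<infinity> then at_top else at_left (real_of_ereal R0))"

definition subsol :: "real \<Rightarrow> real \<Rightarrow> ereal \<Rightarrow> ('a::euclidean_space \<Rightarrow> real) \<Rightarrow> ('a \<Rightarrow> real) \<Rightarrow> bool" where
  "subsol p r0 R0 V w \<longleftrightarrow> C2_on (annulus_co r0 R0) w \<and>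
     (\<forall>x\<in>annulus_open r0 R0. - plap p w x - V x * ppow p (w x) \<le> 0)"

definition supersol :: "real \<Rightarrow> real \<Rightarrow> ereal \<Rightarrow> ('a::euclidean_space \<Rightarrow> real) \<Rightarrow> ('a \<Rightarrow> real) \<Rightarrow> bool" where
  "supersol p r0 R0 V w \<longleftrightarrow> C2_on (annulus_co r0 R0) w \<and>
     (\<forall>x\<in>annulus_open r0 R0. - plap p w x - V x * ppow p (w x) \<ge> 0)"

definition radial_sdec :: "real \<Rightarrow> ereal \<Rightarrow> ('a::euclidean_space \<Rightarrow> real) \<Rightarrow> (real \<Rightarrow> real) \<Rightarrow> bool" where
  "radial_sdec r0 R0 w \<phi> \<longleftrightarrow> (\<forall>x\<in>annulus_co r0 R0. w x = \<phi> (norm x)) \<and>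
     (\<forall>r\<in>radii r0 R0. \<exists>d<0. (\<phi> has_real_derivative d) (at r within radii r0 R0))"

definition mono_smaller :: "real \<Rightarrow> ereal \<Rightarrow> (real \<Rightarrow> real) \<Rightarrow> (real \<Rightarrow> real) \<Rightarrow> bool" where
  "mono_smaller r0 R0 \<phi>u \<phi>v \<longleftrightarrow> \<phi>u \<in> o[to_R0 R0](\<phi>v) \<and>
     (\<exists>r1\<in>radii r0 R0. \<forall>s\<in>radii r0 R0. \<forall>t\<in>radii r0 R0.
        r1 \<le> s \<and> s \<le> t \<longrightarrow> \<phi>u t / \<phi>v t \<le> \<phi>u s / \<phi>v s)"

definition cond_star :: "real \<Rightarrow> real \<Rightarrow> ereal \<Rightarrow> ('a::euclidean_space \<Rightarrow> real) \<Rightarrow> bool" where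
  "cond_star p r0 R0 V \<longleftrightarrow> (\<exists>\<phi>. C2_open (annulus_open r0 R0) \<phi> \<and>
     (\<forall>x\<in>annulus_open r0 R0. \<phi> x > 0) \<and>
     (\<forall>x\<in>annulus_open r0 R0. - plap p \<phi> x - V x * \<phi> x powr (p - 1) \<ge> 0) \<and>
     (\<exists>x\<in>annulus_open r0 R0. - plap p \<phi> x - V x * \<phi> x powr (p - 1) \<noteq> 0))"

end

theory Submission
  imports Defs
begin

lemma powr_aux1: "(x::real) > 0 \<Longrightarrow> x / x powr (p-1) = x powr (2-p)"
proof -
  assume x: "x > 0"
  have "x powr (2-p) = x powr (1 - (p-1))" by simp
  also have "\<dots> = x powr 1 / x powr (p-1)" by (rule powr_diff)
  finally show ?thesis using x by simp
qed

lemma persp_ineq: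
  fixes p Y Z a b :: real
  assumes p: "p \<ge> 2" and Z: "0 < Z" "Z < Y" and b: "0 < b" "b < a"
  shows "Y powr (p-1) * a powr (2-p) - Z powr (p-1) * b powr (2-p)
         \<le> (Y-Z) powr (p-1) * (a-b) powr (2-p)"
proof -
  define t1 where "t1 = (Y-Z)/(a-b)"
  define t2 where "t2 = Z/b"
  define \<tau> where "\<tau> = b/a"
  have t1: "t1 > 0" "t2 > 0" using assms by (auto simp: t1_def t2_def)
  have tau: "0 \<le> \<tau>" "\<tau> \<le> 1" using assms by (auto simp: \<tau>_def)
  have cv: "convex_on {0<..} (\<lambda>x::real. x powr (p-1))" by (rule powr_convex) (use p in auto)
  have comb: "(1 - \<tau>) *\<^sub>R t1 + \<tau> *\<^sub>R t2 = Y / a"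
    using assms by (simp add: t1_def t2_def \<tau>_def field_simps)
  have "(Y/a) powr (p-1) \<le> (1-\<tau>) * t1 powr (p-1) + \<tau> * t2 powr (p-1)"
    using convex_onD[OF cv tau, of t1 t2] t1 comb by simp
  hence "a * (Y/a) powr (p-1) \<le> a * ((1-\<tau>) * t1 powr (p-1) + \<tau> * t2 powr (p-1))"
    using b by (intro mult_left_mono) auto
  moreover have "a * (Y/a) powr (p-1) = Y powr (p-1) * a powr (2-p)"
  proof -
    have "a * (Y/a) powr (p-1) = a powr 1 * (Y powr (p-1) / a powr (p-1))"
      using assms by (simp add: powr_divide)
    also have "\<dots> = Y powr (p-1) * (a powr 1 / a powr (p-1))" by simp
    also have "a powr 1 / a powr (p-1) = a powr (2-p)"
      using assms powr_aux1 by simp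
    finally show ?thesis by simp
  qed
  moreover have "a * ((1-\<tau>) * t1 powr (p-1)) = (Y-Z) powr (p-1) * (a-b) powr (2-p)"
  proof -
    have "a * (1-\<tau>) = (a-b)" using assms by (simp add: \<tau>_def field_simps)
    hence "a * ((1-\<tau>) * t1 powr (p-1)) = (a-b) * t1 powr (p-1)" by (simp add: algebra_simps)
    also have "\<dots> = (a-b) powr 1 * ((Y-Z) powr (p-1) / (a-b) powr (p-1))"
      using assms by (simp add: t1_def powr_divide)
    also have "(a-b) powr 1 / (a-b) powr (p-1) = (a-b) powr (2-p)"
      using assms powr_aux1 by simp
    hence "(a-b) powr 1 * ((Y-Z) powr (p-1) / (a-b) powr (p-1)) = (Y-Z) powr (p-1) * (a-b) powr (2-p)"
      by (metis times_divide_eq_left times_divide_eq_right mult.commute)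
    finally show ?thesis .
  qed
  moreover have "a * (\<tau> * t2 powr (p-1)) = Z powr (p-1) * b powr (2-p)"
  proof -
    have "a * \<tau> = b" using assms by (simp add: \<tau>_def field_simps)
    hence "a * (\<tau> * t2 powr (p-1)) = b * t2 powr (p-1)" by (simp add: algebra_simps)
    also have "\<dots> = b powr 1 * (Z powr (p-1) / b powr (p-1))"
      using assms by (simp add: t2_def powr_divide)
    also have "b powr 1 / b powr (p-1) = b powr (2-p)"
      using assms powr_aux1 by simp
    hence "b powr 1 * (Z powr (p-1) / b powr (p-1)) = Z powr (p-1) * b powr (2-p)"
      by (metis times_divide_eq_left times_divide_eq_right mult.commute)
    finally show ?thesis .
  qed
  ultimately show ?thesis by (simp add: algebra_simps)
qed

lemma grad_inner:
  fixes f :: "'a::euclidean_space \<Rightarrow> real"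
  assumes "(f has_derivative f') (at x)"
  shows "f' h = grad f x \<bullet> h"
proof -
  interpret L: bounded_linear f' using assms by (rule has_derivative_bounded_linear)
  have fd: "frechet_derivative f (at x) = f'" using frechet_derivative_at[OF assms] by simp
  have "grad f x \<bullet> h = (\<Sum>b\<in>Basis. f' b * (b \<bullet> h))"
    by (simp add: grad_def fd inner_sum_left)
  also have "\<dots> = f' (\<Sum>b\<in>Basis. (h \<bullet> b) *\<^sub>R b)"
    by (simp add: L.sum L.scale inner_commute mult.commute)
  also have "\<dots> = f' h" by (simp add: euclidean_representation)
  finally show ?thesis by simp
qed

lemma grad_eqI:
  fixes f :: "'a::euclidean_space \<Rightarrow> real"
  assumes "(f has_derivative (\<lambda>h. g \<bullet> h)) (at x)"
  shows "grad f x = g"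
proof -
  have fd: "frechet_derivative f (at x) = (\<lambda>h. g \<bullet> h)" using frechet_derivative_at[OF assms] by simp
  have "(\<Sum>b\<in>Basis. (b \<bullet> g) *\<^sub>R b) = (\<Sum>b\<in>Basis. (g \<bullet> b) *\<^sub>R b)" by (simp add: inner_commute)
  then show ?thesis by (simp add: grad_def fd euclidean_representation)
qed

lemma has_derivative_grad:
  fixes f :: "'a::euclidean_space \<Rightarrow> real"
  assumes "f differentiable (at x)"
  shows "(f has_derivative (\<lambda>h. grad f x \<bullet> h)) (at x)"
proof -
  obtain f' where f': "(f has_derivative f') (at x)" using assms by (auto simp: differentiable_def)
  have "f' = (\<lambda>h. grad f x \<bullet> h)" using grad_inner[OF f'] by auto
  with f' show ?thesis by simp
qed

lemma sum_inner_lin: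
  fixes H :: "'a::euclidean_space \<Rightarrow> 'a"
  assumes "linear H"
  shows "(\<Sum>b\<in>Basis. (y \<bullet> H b) * (y \<bullet> b)) = y \<bullet> H y"
proof -
  have "y \<bullet> H y = y \<bullet> H (\<Sum>b\<in>Basis. (y \<bullet> b) *\<^sub>R b)" by (simp add: euclidean_representation)
  also have "\<dots> = (\<Sum>b\<in>Basis. (y \<bullet> b) * (y \<bullet> H b))"
    by (simp add: linear_sum[OF assms] linear_cmul[OF assms] inner_sum_right)
  finally show ?thesis by (simp add: mult.commute)
qed

lemma plap_formula:
  fixes G :: "'a::euclidean_space \<Rightarrow> 'a"
  assumes G: "(G has_derivative H) (at x)" and nz: "G x \<noteq> 0"
  shows "divg (\<lambda>y. ppow_vec p (G y)) x =
    norm (G x) powr (p-2) * ((\<Sum>b\<in>Basis. H b \<bullet> b) + (p-2) * (G x \<bullet> H (G x)) / (norm (G x))\<^sup>2)"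
proof -
  define q where "q = p - 2"
  define n where "n = norm (G x)"
  have n: "n > 0" using nz by (simp add: n_def)
  have linH: "linear H" using G has_derivative_linear by blast
  have dn: "((\<lambda>y. norm (G y)) has_derivative (\<lambda>k. H k \<bullet> sgn (G x))) (at x)"
    using has_derivative_compose[OF G has_derivative_norm[OF nz]] by simp
  have dp: "((\<lambda>y. norm (G y) powr q) has_derivative (\<lambda>k. (H k \<bullet> sgn (G x)) * (q * n powr (q-1)))) (at x)"
  proof -
    have "((\<lambda>z. z powr q) has_real_derivative q * n powr (q - 1)) (at (norm (G x)))"
      using has_real_derivative_powr[OF n, of q] by (simp add: n_def)
    from DERIV_compose_FDERIV[OF this dn] show ?thesis by simp
  qed
  have dpsi: "((\<lambda>y. norm (G y) powr q *\<^sub>R G y) has_derivative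
     (\<lambda>k. n powr q *\<^sub>R H k + ((H k \<bullet> sgn (G x)) * (q * n powr (q-1))) *\<^sub>R G x)) (at x)"
    using has_derivative_scaleR[OF dp G] by (simp add: n_def)
  have "isCont G x" using G has_derivative_continuous by blast
  then obtain d where d: "d > 0" "\<And>y. dist x y < d \<Longrightarrow> G y \<noteq> 0"
    using continuous_at_avoid[of x G 0] nz by auto
  have dpv: "((\<lambda>y. ppow_vec p (G y)) has_derivative
     (\<lambda>k. n powr q *\<^sub>R H k + ((H k \<bullet> sgn (G x)) * (q * n powr (q-1))) *\<^sub>R G x)) (at x)"
    apply (rule has_derivative_transform_within[OF dpsi d(1)])
    using d(2) by (auto simp: ppow_vec_def q_def dist_commute)
  have fd: "frechet_derivative (\<lambda>y. ppow_vec p (G y)) (at x) =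
     (\<lambda>k. n powr q *\<^sub>R H k + ((H k \<bullet> sgn (G x)) * (q * n powr (q-1))) *\<^sub>R G x)"
    using frechet_derivative_at[OF dpv] by simp
  have "divg (\<lambda>y. ppow_vec p (G y)) x =
     (\<Sum>b\<in>Basis. n powr q * (H b \<bullet> b) + (H b \<bullet> sgn (G x)) * (q * n powr (q-1)) * (G x \<bullet> b))"
    by (simp add: divg_def fd inner_add_left)
  also have "\<dots> = n powr q * (\<Sum>b\<in>Basis. H b \<bullet> b) + q * n powr (q-1) / n * (\<Sum>b\<in>Basis. (G x \<bullet> H b) * (G x \<bullet> b))"
    by (simp add: sum.distrib sum_distrib_left sum_divide_distrib sgn_div_norm n_def inner_commute algebra_simps) (simp add: divide_inverse algebra_simps)
  also have "(\<Sum>b\<in>Basis. (G x \<bullet> H b) * (G x \<bullet> b)) = G x \<bullet> H (G x)"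
    by (rule sum_inner_lin[OF linH])
  finally have eq: "divg (\<lambda>y. ppow_vec p (G y)) x = n powr q * (\<Sum>b\<in>Basis. H b \<bullet> b) + q * n powr (q - 1) / n * (G x \<bullet> H (G x))" .
  have e2: "n powr (q-1) / n = n powr q / n^2"
  proof -
    have "n powr (q-1) = n powr q / n" using n by (simp add: powr_diff)
    thus ?thesis by (simp add: power2_eq_square)
  qed
  have "q * n powr (q - 1) / n * (G x \<bullet> H (G x)) = n powr q * (q * (G x \<bullet> H (G x)) / n^2)"
  proof -
    have "q * n powr (q - 1) / n * (G x \<bullet> H (G x)) = q * (n powr (q - 1) / n) * (G x \<bullet> H (G x))" by simp
    also have "\<dots> = q * (n powr q / n^2) * (G x \<bullet> H (G x))" by (simp only: e2)
    finally show ?thesis by simp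
  qed
  then show ?thesis unfolding eq by (simp add: n_def q_def algebra_simps)
qed

lemma second_order_min:
  fixes k k' :: "real \<Rightarrow> real"
  assumes d: "d > 0" and mn: "\<And>t. \<bar>t\<bar> < d \<Longrightarrow> k 0 \<le> k t"
    and dk: "\<And>t. \<bar>t\<bar> < d \<Longrightarrow> (k has_real_derivative k' t) (at t)"
    and k0: "k' 0 = 0" and dk': "(k' has_real_derivative c) (at 0)"
  shows "c \<ge> 0"
proof (rule ccontr)
  assume "\<not> c \<ge> 0" hence c: "c < 0" by simp
  have "((\<lambda>h. (k' (0 + h) - k' 0) / h) \<longlongrightarrow> c) (at 0)" using dk' by (simp add: DERIV_def)
  hence "((\<lambda>h. k' h / h) \<longlongrightarrow> c) (at_right 0)" using k0 by (simp add: filterlim_at_split)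
  hence "eventually (\<lambda>h. k' h / h < 0) (at_right 0)"
    using c by (simp add: order_tendstoD(2))
  then obtain \<tau> where \<tau>: "\<tau> > 0" "\<And>h. h > 0 \<Longrightarrow> h < \<tau> \<Longrightarrow> k' h / h < 0"
    by (auto simp: eventually_at_right_field)
  define t where "t = min \<tau> d / 2"
  have t: "0 < t" "t < \<tau>" "t < d" using \<tau> d by (auto simp: t_def)
  obtain z where z: "0 < z" "z < t" "k t - k 0 = (t - 0) * k' z"
    using MVT2[of 0 t k k'] t dk by force
  have "k' z / z < 0" using \<tau>(2)[of z] z t by simp
  hence "k' z < 0" using z by (simp add: divide_less_0_iff)
  hence "t * k' z < 0" using t by (simp add: mult_pos_neg)
  hence "k t < k 0" using z by simp
  moreover have "k 0 \<le> k t" using mn t by simp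
  ultimately show False by simp
qed

lemma touching:
  fixes F W :: "'a::euclidean_space \<Rightarrow> real"
  assumes S: "open S" "x \<in> S"
    and le: "\<And>y. y \<in> S \<Longrightarrow> F y \<le> c * W y" and eq: "F x = c * W x"
    and dF: "\<And>y. y \<in> S \<Longrightarrow> F differentiable (at y)"
    and dW: "\<And>y. y \<in> S \<Longrightarrow> W differentiable (at y)"
    and hF: "(grad F has_derivative HF) (at x)" and hW: "(grad W has_derivative HW) (at x)"
  shows "grad F x = c *\<^sub>R grad W x \<and> (\<forall>h. HF h \<bullet> h \<le> c * (HW h \<bullet> h))"
proof -
  define D where "D y = c * W y - F y" for y
  define G where "G y = c *\<^sub>R grad W y - grad F y" for y
  have dD: "(D has_derivative (\<lambda>h. G y \<bullet> h)) (at y)" if "y \<in> S" for y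
  proof -
    have "(D has_derivative (\<lambda>h. c * (grad W y \<bullet> h) - grad F y \<bullet> h)) (at y)"
      unfolding D_def using that dF dW
      by (intro has_derivative_diff has_derivative_mult_right has_derivative_grad) auto
    then show ?thesis by (simp add: G_def inner_diff_left)
  qed
  have D0: "D x = 0" using eq by (simp add: D_def)
  have Dge: "D y \<ge> 0" if "y \<in> S" for y using le[OF that] by (simp add: D_def)
  have "eventually (\<lambda>y. D x \<le> D y) (at x)"
    using eventually_at_in_open'[OF S] by eventually_elim (use Dge D0 in auto)
  from has_derivative_local_min[OF dD[OF S(2)] this]
  have "(\<lambda>h. G x \<bullet> h) = (\<lambda>h. 0)" .
  hence "G x \<bullet> G x = 0" by meson
  hence G0: "G x = 0" by simp
  hence g1: "grad F x = c *\<^sub>R grad W x" by (simp add: G_def)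
  have hG: "(G has_derivative (\<lambda>k. c *\<^sub>R HW k - HF k)) (at x)"
    unfolding G_def by (intro has_derivative_diff has_derivative_scaleR_right hF hW)
  have hess: "HF h \<bullet> h \<le> c * (HW h \<bullet> h)" for h
  proof -
    obtain e where e: "e > 0" "ball x e \<subseteq> S" using S open_contains_ball by blast
    define d where "d = e / (norm h + 1)"
    have d: "d > 0" using e by (simp add: d_def add_nonneg_pos)
    have inS: "x + t *\<^sub>R h \<in> S" if "\<bar>t\<bar> < d" for t
    proof -
      have "norm (t *\<^sub>R h) = \<bar>t\<bar> * norm h" by simp
      also have "\<dots> \<le> \<bar>t\<bar> * (norm h + 1)" by (simp add: mult_left_mono)
      also have "\<dots> < d * (norm h + 1)" using that
        by (intro mult_strict_right_mono) (auto intro: add_nonneg_pos)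
      also have "\<dots> = e" using add_nonneg_pos[of "norm h" 1] by (simp add: d_def)
      finally have "x + t *\<^sub>R h \<in> ball x e" by (simp add: dist_norm)
      thus ?thesis using e by blast
    qed
    have line: "((\<lambda>t. x + t *\<^sub>R h) has_derivative (\<lambda>s. s *\<^sub>R h)) (at t)" for t :: real
      by (intro derivative_eq_intros) auto
    have dk: "((\<lambda>t. D (x + t *\<^sub>R h)) has_real_derivative (G (x + t *\<^sub>R h) \<bullet> h)) (at t)"
      if "\<bar>t\<bar> < d" for t
    proof -
      have "((\<lambda>t. D (x + t *\<^sub>R h)) has_derivative (\<lambda>s. G (x + t *\<^sub>R h) \<bullet> (s *\<^sub>R h))) (at t)"
        using has_derivative_compose[OF line dD[OF inS[OF that]]] .
      then show ?thesis
        by (rule has_derivative_imp_has_field_derivative) (simp add: mult.commute)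
    qed
    have hG': "(G has_derivative (\<lambda>k. c *\<^sub>R HW k - HF k)) (at ((\<lambda>t. x + t *\<^sub>R h) 0))"
      using hG by simp
    have "((\<lambda>t. G (x + t *\<^sub>R h)) has_derivative (\<lambda>s. c *\<^sub>R HW (s *\<^sub>R h) - HF (s *\<^sub>R h))) (at 0)"
      using has_derivative_compose[OF line hG'] by simp
    hence "((\<lambda>t. G (x + t *\<^sub>R h) \<bullet> h) has_derivative (\<lambda>s. (c *\<^sub>R HW (s *\<^sub>R h) - HF (s *\<^sub>R h)) \<bullet> h)) (at 0)"
      by (rule has_derivative_inner_left)
    moreover have "linear HW" "linear HF" using hW hF has_derivative_linear by blast+
    ultimately have dk': "((\<lambda>t. G (x + t *\<^sub>R h) \<bullet> h) has_real_derivative ((c *\<^sub>R HW h - HF h) \<bullet> h)) (at 0)"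
      by (intro has_derivative_imp_has_field_derivative)
         (auto simp: linear_cmul linear_diff inner_diff_left algebra_simps)
    have "(c *\<^sub>R HW h - HF h) \<bullet> h \<ge> 0"
    proof (rule second_order_min[OF d _ dk])
      show "D (x + 0 *\<^sub>R h) \<le> D (x + t *\<^sub>R h)" if "\<bar>t\<bar> < d" for t
        using Dge[OF inS[OF that]] D0 by simp
      show "G (x + 0 *\<^sub>R h) \<bullet> h = 0" using G0 by simp
    qed (use dk' in auto)
    thus ?thesis by (simp add: inner_diff_left)
  qed
  show ?thesis using g1 hess by blast
qed

lemma powr_m2_mult: "(x::real) > 0 \<Longrightarrow> x powr (p-2) * x = x powr (p-1)"
proof -
  assume x: "x > 0"
  have "x powr (p-1) = x powr ((p-2) + 1)" by (simp add: algebra_simps)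
  also have "\<dots> = x powr (p-2) * x powr 1" by (rule powr_add)
  finally show ?thesis using x by simp
qed

lemma plap_touch:
  fixes F W :: "'a::euclidean_space \<Rightarrow> real"
  assumes S: "open S" "x \<in> S"
    and le: "\<And>y. y \<in> S \<Longrightarrow> F y \<le> c * W y" and eq: "F x = c * W x"
    and dF: "\<And>y. y \<in> S \<Longrightarrow> F differentiable (at y)"
    and dW: "\<And>y. y \<in> S \<Longrightarrow> W differentiable (at y)"
    and hF: "(grad F has_derivative HF) (at x)" and hW: "(grad W has_derivative HW) (at x)"
    and p: "p \<ge> 2" and c: "c > 0" and nz: "grad F x \<noteq> 0"
  shows "plap p F x \<le> c powr (p-1) * plap p W x"
proof -
  from touching[OF S le eq dF dW hF hW]
  have g: "grad F x = c *\<^sub>R grad W x" and hs: "\<And>h. HF h \<bullet> h \<le> c * (HW h \<bullet> h)" by auto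
  define gW where "gW = grad W x"
  have nzW: "gW \<noteq> 0" using nz g by (auto simp: gW_def)
  have linW: "linear HW" using hW has_derivative_linear by blast
  have linF: "linear HF" using hF has_derivative_linear by blast
  define BW where "BW = (\<Sum>b\<in>Basis. HW b \<bullet> b) + (p-2) * (gW \<bullet> HW gW) / (norm gW)\<^sup>2"
  define BF where "BF = (\<Sum>b\<in>Basis. HF b \<bullet> b) + (p-2) * (grad F x \<bullet> HF (grad F x)) / (norm (grad F x))\<^sup>2"
  have pW: "plap p W x = norm gW powr (p-2) * BW"
    unfolding plap_def BW_def gW_def by (rule plap_formula[OF hW]) (use nzW gW_def in auto)
  have pF: "plap p F x = norm (grad F x) powr (p-2) * BF"
    unfolding plap_def BF_def by (rule plap_formula[OF hF nz])
  have s1: "(\<Sum>b\<in>Basis. HF b \<bullet> b) \<le> c * (\<Sum>b\<in>Basis. HW b \<bullet> b)"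
    by (simp add: sum_distrib_left sum_mono hs)
  have "grad F x \<bullet> HF (grad F x) \<le> c * (c^2 * (gW \<bullet> HW gW))"
  proof -
    have "grad F x \<bullet> HF (grad F x) = HF (grad F x) \<bullet> grad F x" by (simp add: inner_commute)
    also have "\<dots> \<le> c * (HW (grad F x) \<bullet> grad F x)" by (rule hs)
    also have "HW (grad F x) \<bullet> grad F x = c^2 * (gW \<bullet> HW gW)"
      by (simp add: g gW_def linear_cmul[OF linW] power2_eq_square inner_commute)
    finally show ?thesis .
  qed
  moreover have "(norm (grad F x))\<^sup>2 = c^2 * (norm gW)\<^sup>2" using c by (simp add: g gW_def power_mult_distrib)
  ultimately have s2: "(grad F x \<bullet> HF (grad F x)) / (norm (grad F x))\<^sup>2 \<le> c * ((gW \<bullet> HW gW) / (norm gW)\<^sup>2)"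
    using c nzW by (simp add: divide_simps) (simp add: algebra_simps power2_eq_square)
  have "BF \<le> c * BW"
  proof -
    have "(p-2) * ((grad F x \<bullet> HF (grad F x)) / (norm (grad F x))\<^sup>2) \<le> (p-2) * (c * ((gW \<bullet> HW gW) / (norm gW)\<^sup>2))"
      using p s2 by (intro mult_left_mono) auto
    thus ?thesis using s1 unfolding BF_def BW_def by (simp add: algebra_simps)
  qed
  have nF: "norm (grad F x) powr (p-2) = c powr (p-2) * norm gW powr (p-2)"
    using c by (simp add: g gW_def powr_mult)
  have "plap p F x = c powr (p-2) * norm gW powr (p-2) * BF" by (simp add: pF nF)
  also have "\<dots> \<le> c powr (p-2) * norm gW powr (p-2) * (c * BW)"
    using \<open>BF \<le> c * BW\<close> by (intro mult_left_mono) auto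
  also have "\<dots> = (c powr (p-2) * c) * (norm gW powr (p-2) * BW)" by (simp add: algebra_simps)
  also have "c powr (p-2) * c = c powr (p-1)"
    using powr_m2_mult[OF c] .
  finally show ?thesis by (simp add: pW)
qed

lemma key_real:
  fixes p a b0 ux vx \<epsilon> \<eta> V Su Sv \<delta> :: real
  assumes p: "p \<ge> 2" and pos: "a > 0" "b0 > 0" "ux > 0" "vx > 0" "\<epsilon> > 0" "\<eta> > 0" "V \<ge> 0"
    and f0: "ux - \<epsilon> * vx > 0" and ratio: "a * vx \<ge> b0 * ux"
    and sub: "Su * a powr (p-2) \<ge> - V * ux powr (p-1)"
    and sup: "Sv * b0 powr (p-2) \<le> - V * vx powr (p-1)"
    and del: "\<delta> \<ge> \<eta> * (ux - \<epsilon> * vx)^2"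
  shows "((1 + 2*\<eta>*(ux - \<epsilon> * vx)) * (a - \<epsilon>*b0)) powr (p-2) *
           ((1 + 2*\<eta>*(ux - \<epsilon> * vx)) * (Su - \<epsilon> * Sv) + (p-1)*2*\<eta>*(a - \<epsilon>*b0)^2)
         > - V * ((ux - \<epsilon> * vx) + \<delta> + \<eta>*(ux - \<epsilon> * vx)^2) powr (p-1)"
proof -
  define f0 where "f0 = ux - \<epsilon> * vx"
  define s where "s = a - \<epsilon>*b0"
  define g1 where "g1 = 1 + 2*\<eta>*f0"
  have f0p: "f0 > 0" using f0 by (simp add: f0_def)
  have g1p: "g1 > 0" using f0p pos by (simp add: g1_def add_pos_pos)
  have "a * vx > \<epsilon> * b0 * vx"
  proof -
    have "b0 * ux > b0 * (\<epsilon> * vx)" using f0 pos by (intro mult_strict_left_mono) auto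
    thus ?thesis using ratio by (simp add: algebra_simps)
  qed
  hence sp: "s > 0" using pos by (simp add: s_def)
  have ap: "\<And>y::real. y > 0 \<Longrightarrow> y powr (2-p) = 1 / y powr (p-2)"
    by (simp add: powr_minus_divide[symmetric] algebra_simps)
  have A1: "Su \<ge> - V * ux powr (p-1) * a powr (2-p)"
  proof -
    have "Su = Su * a powr (p-2) * a powr (2-p)" using pos ap[of a] by simp
    also have "\<dots> \<ge> - V * ux powr (p-1) * a powr (2-p)"
      using sub by (intro mult_right_mono) auto
    finally show ?thesis .
  qed
  have A2: "\<epsilon> * Sv \<le> - V * (\<epsilon> * vx) powr (p-1) * (\<epsilon>*b0) powr (2-p)"
  proof -
    have "Sv = Sv * b0 powr (p-2) * b0 powr (2-p)" using pos ap[of b0] by simp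
    also have "\<dots> \<le> - V * vx powr (p-1) * b0 powr (2-p)"
      using sup by (intro mult_right_mono) auto
    finally have "\<epsilon> * Sv \<le> \<epsilon> * (- V * vx powr (p-1) * b0 powr (2-p))"
      using pos by (intro mult_left_mono) auto
    moreover have "\<epsilon> powr (p-1) * \<epsilon> powr (2-p) = \<epsilon>"
      using pos by (simp add: powr_add[symmetric])
    moreover have "(\<epsilon> * vx) powr (p-1) * (\<epsilon>*b0) powr (2-p) = (\<epsilon> powr (p-1) * \<epsilon> powr (2-p)) * (vx powr (p-1) * b0 powr (2-p))"
      using pos by (simp add: powr_mult)
    ultimately show ?thesis by (simp add: algebra_simps)
  qed
  have A3: "Su - \<epsilon> * Sv \<ge> - V * (f0 powr (p-1) * s powr (2-p))"
  proof -
    have "ux powr (p-1) * a powr (2-p) - (\<epsilon> * vx) powr (p-1) * (\<epsilon>*b0) powr (2-p)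
          \<le> (ux - \<epsilon> * vx) powr (p-1) * (a - \<epsilon>*b0) powr (2-p)"
      using sp f0 pos p by (intro persp_ineq) (auto simp: s_def)
    hence "V * (ux powr (p-1) * a powr (2-p) - (\<epsilon> * vx) powr (p-1) * (\<epsilon>*b0) powr (2-p))
          \<le> V * (f0 powr (p-1) * s powr (2-p))"
      using pos by (intro mult_left_mono) (auto simp: f0_def s_def)
    thus ?thesis using A1 A2 by (simp add: algebra_simps)
  qed
  have A5: "(g1 * s) powr (p-2) * (g1 * (Su - \<epsilon>*Sv)) \<ge> - V * (g1 * f0) powr (p-1)"
  proof -
    have "(g1 * s) powr (p-2) * (g1 * (Su - \<epsilon>*Sv)) \<ge> (g1 * s) powr (p-2) * (g1 * (- V * (f0 powr (p-1) * s powr (2-p))))"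
      using A3 g1p by (intro mult_left_mono) auto
    also have "(g1 * s) powr (p-2) * (g1 * (- V * (f0 powr (p-1) * s powr (2-p))))
       = - V * (g1 powr (p-2) * g1) * f0 powr (p-1) * (s powr (p-2) * s powr (2-p))"
      using g1p sp by (simp add: powr_mult algebra_simps)
    also have "s powr (p-2) * s powr (2-p) = 1" using sp by (simp add: powr_add[symmetric])
    also have "g1 powr (p-2) * g1 = g1 powr (p-1)" by (rule powr_m2_mult[OF g1p])
    finally show ?thesis using g1p f0p by (simp add: powr_mult algebra_simps)
  qed
  have A6: "(g1 * s) powr (p-2) * ((p-1)*2*\<eta> * s^2) > 0"
    using g1p sp pos p by (intro mult_pos_pos) auto
  have A7: "(g1 * f0) powr (p-1) \<le> (f0 + \<delta> + \<eta>*f0^2) powr (p-1)"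
  proof (rule powr_mono2)
    show "g1 * f0 \<le> f0 + \<delta> + \<eta>*f0^2" using del by (simp add: g1_def f0_def power2_eq_square algebra_simps)
  qed (use p g1p f0p in auto)
  have "- V * (f0 + \<delta> + \<eta>*f0^2) powr (p-1) \<le> - V * (g1 * f0) powr (p-1)"
    using A7 pos by (simp add: mult_left_mono)
  also have "\<dots> < (g1 * s) powr (p-2) * (g1 * (Su - \<epsilon>*Sv) + (p-1)*2*\<eta> * s^2)"
    using A5 A6 by (simp add: distrib_left)
  finally show ?thesis by (simp add: f0_def s_def g1_def)
qed

lemma grad_radial:
  fixes u :: "'a::euclidean_space \<Rightarrow> real"
  assumes x: "x \<noteq> 0" and S: "open S" "x \<in> S" and eq: "\<And>y. y \<in> S \<Longrightarrow> u y = \<phi> (norm y)"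
    and d: "(\<phi> has_real_derivative d) (at (norm x))"
  shows "grad u x = d *\<^sub>R sgn x" and "u differentiable (at x)"
proof -
  have "((\<lambda>y. \<phi> (norm y)) has_derivative (\<lambda>h. (h \<bullet> sgn x) * d)) (at x)"
    using DERIV_compose_FDERIV[OF d has_derivative_norm[OF x]] .
  hence "(u has_derivative (\<lambda>h. (h \<bullet> sgn x) * d)) (at x)"
    by (rule has_derivative_transform_within_open[OF _ S]) (simp add: eq)
  moreover have "(\<lambda>h. (h \<bullet> sgn x) * d) = (\<lambda>h. (d *\<^sub>R sgn x) \<bullet> h)"
    by (auto simp: inner_commute)
  ultimately have D: "(u has_derivative (\<lambda>h. (d *\<^sub>R sgn x) \<bullet> h)) (at x)" by simp
  show "grad u x = d *\<^sub>R sgn x" by (rule grad_eqI[OF D])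
  show "u differentiable (at x)" using D by (auto simp: differentiable_def)
qed

lemma plap_formula_dir:
  fixes G :: "'a::euclidean_space \<Rightarrow> 'a"
  assumes G: "(G has_derivative H) (at x)" and Gx: "G x = c *\<^sub>R e" and c: "c \<noteq> 0" and e: "norm e = 1"
  shows "divg (\<lambda>y. ppow_vec p (G y)) x = \<bar>c\<bar> powr (p-2) * ((\<Sum>b\<in>Basis. H b \<bullet> b) + (p-2) * (e \<bullet> H e))"
proof -
  have nz: "G x \<noteq> 0" using Gx c e by auto
  have lin: "linear H" using G has_derivative_linear by blast
  have n: "norm (G x) = \<bar>c\<bar>" using Gx e by simp
  have "(G x \<bullet> H (G x)) / (norm (G x))\<^sup>2 = e \<bullet> H e"
    using c e by (simp add: Gx n linear_cmul[OF lin] power2_eq_square abs_mult_self_eq)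
  hence "(p-2) * (G x \<bullet> H (G x)) / (norm (G x))\<^sup>2 = (p-2) * (e \<bullet> H e)" by (simp add: times_divide_eq_right[symmetric] del: times_divide_eq_right)
  with plap_formula[OF G nz, of p] n show ?thesis by simp
qed

lemma sum_sq_basis: "(\<Sum>b\<in>Basis. (y \<bullet> b) * (y \<bullet> b)) = y \<bullet> (y::'a::euclidean_space)"
  using sum_inner_lin[OF linear_id[unfolded id_def], of y] by simp

lemma grad_F:
  fixes u v :: "'a::euclidean_space \<Rightarrow> real" and \<epsilon> \<delta> \<eta> :: real
  assumes S: "open S" "x \<in> S"
    and du: "\<And>y. y \<in> S \<Longrightarrow> u differentiable (at y)"
    and dv: "\<And>y. y \<in> S \<Longrightarrow> v differentiable (at y)"
    and hu: "(grad u has_derivative Hu) (at x)" and hv: "(grad v has_derivative Hv) (at x)"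
  defines "F \<equiv> \<lambda>y. (u y - \<epsilon> * v y) + \<delta> + \<eta> * (u y - \<epsilon> * v y)^2"
  shows "\<And>y. y \<in> S \<Longrightarrow> F differentiable (at y)"
    and "\<And>y. y \<in> S \<Longrightarrow> grad F y = (1 + 2*\<eta>*(u y - \<epsilon> * v y)) *\<^sub>R (grad u y - \<epsilon> *\<^sub>R grad v y)"
    and "(grad F has_derivative (\<lambda>k. (1 + 2*\<eta>*(u x - \<epsilon> * v x)) *\<^sub>R (Hu k - \<epsilon> *\<^sub>R Hv k)
            + (2*\<eta>*((grad u x - \<epsilon> *\<^sub>R grad v x) \<bullet> k)) *\<^sub>R (grad u x - \<epsilon> *\<^sub>R grad v x))) (at x)"
proof -
  have DF: "(F has_derivative (\<lambda>h. ((1 + 2*\<eta>*(u y - \<epsilon> * v y)) *\<^sub>R (grad u y - \<epsilon> *\<^sub>R grad v y)) \<bullet> h)) (at y)"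
    if y: "y \<in> S" for y
  proof -
    have "(F has_derivative (\<lambda>h. (grad u y \<bullet> h - \<epsilon> * (grad v y \<bullet> h)) +
              \<eta> * (2 * (u y - \<epsilon> * v y) * (grad u y \<bullet> h - \<epsilon> * (grad v y \<bullet> h))))) (at y)"
      unfolding F_def using has_derivative_grad[OF du[OF y]] has_derivative_grad[OF dv[OF y]]
      by (auto intro!: derivative_eq_intros simp: power2_eq_square algebra_simps)
    thus ?thesis by (simp add: inner_diff_left algebra_simps)
  qed
  show "F differentiable (at y)" if "y \<in> S" for y using DF[OF that] by (auto simp: differentiable_def)
  show gF: "grad F y = (1 + 2*\<eta>*(u y - \<epsilon> * v y)) *\<^sub>R (grad u y - \<epsilon> *\<^sub>R grad v y)" if "y \<in> S" for y
    by (rule grad_eqI[OF DF[OF that]])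
  have ds: "((\<lambda>y. 1 + 2*\<eta>*(u y - \<epsilon> * v y)) has_derivative (\<lambda>k. 2*\<eta>*((grad u x - \<epsilon> *\<^sub>R grad v x) \<bullet> k))) (at x)"
  proof -
    have "((\<lambda>y. 1 + 2*\<eta>*(u y - \<epsilon> * v y)) has_derivative (\<lambda>k. 2*\<eta>*(grad u x \<bullet> k - \<epsilon> * (grad v x \<bullet> k)))) (at x)"
      using has_derivative_grad[OF du[OF S(2)]] has_derivative_grad[OF dv[OF S(2)]]
      by (auto intro!: derivative_eq_intros)
    thus ?thesis by (simp add: inner_diff_left)
  qed
  have dg: "((\<lambda>y. grad u y - \<epsilon> *\<^sub>R grad v y) has_derivative (\<lambda>k. Hu k - \<epsilon> *\<^sub>R Hv k)) (at x)"
    using hu hv by (intro has_derivative_diff has_derivative_scaleR_right)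
  have "((\<lambda>y. (1 + 2*\<eta>*(u y - \<epsilon> * v y)) *\<^sub>R (grad u y - \<epsilon> *\<^sub>R grad v y)) has_derivative
     (\<lambda>k. (1 + 2*\<eta>*(u x - \<epsilon> * v x)) *\<^sub>R (Hu k - \<epsilon> *\<^sub>R Hv k)
            + (2*\<eta>*((grad u x - \<epsilon> *\<^sub>R grad v x) \<bullet> k)) *\<^sub>R (grad u x - \<epsilon> *\<^sub>R grad v x))) (at x)"
    using has_derivative_scaleR[OF ds dg] by simp
  then show "(grad F has_derivative (\<lambda>k. (1 + 2*\<eta>*(u x - \<epsilon> * v x)) *\<^sub>R (Hu k - \<epsilon> *\<^sub>R Hv k)
            + (2*\<eta>*((grad u x - \<epsilon> *\<^sub>R grad v x) \<bullet> k)) *\<^sub>R (grad u x - \<epsilon> *\<^sub>R grad v x))) (at x)"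
    by (rule has_derivative_transform_within_open[OF _ S]) (simp add: gF)
qed

lemma strict_F:
  fixes u v :: "'a::euclidean_space \<Rightarrow> real" and \<epsilon> \<delta> \<eta> V p du dv :: real
  assumes p: "p \<ge> 2" and S: "open S" "x \<in> S" and x0: "x \<noteq> 0"
    and diffu: "\<And>y. y \<in> S \<Longrightarrow> u differentiable (at y)"
    and diffv: "\<And>y. y \<in> S \<Longrightarrow> v differentiable (at y)"
    and hu: "(grad u has_derivative Hu) (at x)" and hv: "(grad v has_derivative Hv) (at x)"
    and gu: "grad u x = du *\<^sub>R sgn x" and gv: "grad v x = dv *\<^sub>R sgn x"
    and du: "du < 0" and dv: "dv < 0" and ux: "u x > 0" and vx: "v x > 0"
    and pos: "\<epsilon> > 0" "\<eta> > 0" "V \<ge> 0" and f0: "u x - \<epsilon> * v x > 0"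
    and ratio: "(-du) * v x \<ge> (-dv) * u x"
    and sub: "- plap p u x - V * ppow p (u x) \<le> 0"
    and sup: "- plap p v x - V * ppow p (v x) \<ge> 0"
    and del: "\<delta> \<ge> \<eta> * (u x - \<epsilon> * v x)^2"
  defines "F \<equiv> \<lambda>y. (u y - \<epsilon> * v y) + \<delta> + \<eta> * (u y - \<epsilon> * v y)^2"
  shows "plap p F x > - V * ppow p (F x) \<and> grad F x \<noteq> 0"
proof -
  define e where "e = sgn x"
  have e1: "norm e = 1" using x0 by (simp add: e_def norm_sgn)
  define q where "q = p - 2"
  define Tu where "Tu = (\<Sum>b\<in>Basis. Hu b \<bullet> b)"
  define Tv where "Tv = (\<Sum>b\<in>Basis. Hv b \<bullet> b)"
  define Qu where "Qu = e \<bullet> Hu e"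
  define Qv where "Qv = e \<bullet> Hv e"
  define g1 where "g1 = 1 + 2*\<eta>*(u x - \<epsilon> * v x)"
  define c where "c = du - \<epsilon> * dv"
  have g1p: "g1 > 0" using f0 pos by (simp add: g1_def add_pos_pos)
  have "(-du) * v x > (-dv) * (\<epsilon> * v x)"
  proof -
    have "(-dv) * u x > (-dv) * (\<epsilon> * v x)" using dv f0 by (intro mult_strict_left_mono) auto
    thus ?thesis using ratio by linarith
  qed
  hence cneg: "c < 0" using vx by (simp add: c_def algebra_simps)
  have Pu: "plap p u x = \<bar>du\<bar> powr q * (Tu + q * Qu)"
    unfolding plap_def Tu_def Qu_def q_def
    by (rule plap_formula_dir[OF hu _ _ e1]) (use gu du e_def in auto)
  have Pv: "plap p v x = \<bar>dv\<bar> powr q * (Tv + q * Qv)"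
    unfolding plap_def Tv_def Qv_def q_def
    by (rule plap_formula_dir[OF hv _ _ e1]) (use gv dv e_def in auto)
  note GF0 = grad_F[where S=S and x=x and Hu=Hu and Hv=Hv and u=u and v=v and \<epsilon>=\<epsilon> and \<delta>=\<delta> and \<eta>=\<eta>]
  have GF2: "grad F x = (1 + 2*\<eta>*(u x - \<epsilon> * v x)) *\<^sub>R (grad u x - \<epsilon> *\<^sub>R grad v x)"
    unfolding F_def using GF0(2) S diffu diffv hu hv by blast
  have GF3: "(grad F has_derivative (\<lambda>k. (1 + 2*\<eta>*(u x - \<epsilon> * v x)) *\<^sub>R (Hu k - \<epsilon> *\<^sub>R Hv k)
            + (2*\<eta>*((grad u x - \<epsilon> *\<^sub>R grad v x) \<bullet> k)) *\<^sub>R (grad u x - \<epsilon> *\<^sub>R grad v x))) (at x)"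
    unfolding F_def using GF0(3) S diffu diffv hu hv by blast
  define HF where "HF = (\<lambda>k. g1 *\<^sub>R (Hu k - \<epsilon> *\<^sub>R Hv k)
            + (2*\<eta>*((grad u x - \<epsilon> *\<^sub>R grad v x) \<bullet> k)) *\<^sub>R (grad u x - \<epsilon> *\<^sub>R grad v x))"
  have hF: "(grad F has_derivative HF) (at x)" using GF3 by (simp add: HF_def g1_def)
  have gfx: "grad u x - \<epsilon> *\<^sub>R grad v x = c *\<^sub>R e" by (simp add: gu gv c_def e_def algebra_simps)
  have gFx: "grad F x = (g1 * c) *\<^sub>R e" using GF2 by (simp add: g1_def gfx)
  have g1c: "g1 * c \<noteq> 0" using g1p cneg by simp
  have PF: "plap p F x = \<bar>g1 * c\<bar> powr q * ((\<Sum>b\<in>Basis. HF b \<bullet> b) + q * (e \<bullet> HF e))"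
    unfolding plap_def q_def by (rule plap_formula_dir[OF hF gFx g1c e1])
  have sF: "(\<Sum>b\<in>Basis. HF b \<bullet> b) = g1 * (Tu - \<epsilon> * Tv) + 2*\<eta>*c^2"
  proof -
    have "(\<Sum>b\<in>Basis. HF b \<bullet> b) = (\<Sum>b\<in>Basis. g1 * (Hu b \<bullet> b) - g1 * \<epsilon> * (Hv b \<bullet> b) + 2*\<eta>*((c *\<^sub>R e \<bullet> b) * (c *\<^sub>R e \<bullet> b)))"
      by (intro sum.cong refl) (simp add: HF_def gfx inner_add_left inner_diff_left algebra_simps)
    also have "\<dots> = g1 * Tu - g1 * \<epsilon> * Tv + 2*\<eta>*(\<Sum>b\<in>Basis. (c *\<^sub>R e \<bullet> b) * (c *\<^sub>R e \<bullet> b))"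
      by (simp add: sum.distrib sum_subtractf sum_distrib_left Tu_def Tv_def)
    also have "(\<Sum>b\<in>Basis. (c *\<^sub>R e \<bullet> b) * (c *\<^sub>R e \<bullet> b)) = c^2"
    proof -
      have "e \<bullet> e = 1" using e1 by (simp add: dot_square_norm)
      thus ?thesis using sum_sq_basis[of "c *\<^sub>R e"] by (simp add: power2_eq_square)
    qed
    finally show ?thesis by (simp add: algebra_simps)
  qed
  have qF: "e \<bullet> HF e = g1 * (Qu - \<epsilon> * Qv) + 2*\<eta>*c^2"
  proof -
    have ee: "e \<bullet> e = 1" using e1 by (simp add: dot_square_norm)
    show ?thesis by (simp add: HF_def gfx Qu_def Qv_def inner_add_right inner_diff_right ee power2_eq_square algebra_simps)
  qed
  have PF2: "plap p F x = (g1 * (-c)) powr (p-2) * (g1 * ((Tu + q*Qu) - \<epsilon> * (Tv + q*Qv)) + (p-1)*2*\<eta>*(-c)^2)"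
    using g1p cneg by (simp add: PF sF qF q_def abs_mult algebra_simps)
  have ppu: "ppow p (u x) = u x powr (p-1)" using ux by (simp add: ppow_def powr_m2_mult)
  have ppv: "ppow p (v x) = v x powr (p-1)" using vx by (simp add: ppow_def powr_m2_mult)
  have Fx: "F x = (u x - \<epsilon> * v x) + \<delta> + \<eta> * (u x - \<epsilon> * v x)^2" by (simp add: F_def)
  have Fxp: "F x > 0"
  proof -
    have "\<eta> * (u x - \<epsilon> * v x)^2 \<ge> 0" using pos by simp
    thus ?thesis using Fx f0 del by linarith
  qed
  have ppF: "ppow p (F x) = F x powr (p-1)" using Fxp by (simp add: ppow_def powr_m2_mult)
  have "((1 + 2*\<eta>*(u x - \<epsilon> * v x)) * ((-du) - \<epsilon>*(-dv))) powr (p-2) *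
           ((1 + 2*\<eta>*(u x - \<epsilon> * v x)) * ((Tu + q*Qu) - \<epsilon> * (Tv + q*Qv)) + (p-1)*2*\<eta>*((-du) - \<epsilon>*(-dv))^2)
         > - V * ((u x - \<epsilon> * v x) + \<delta> + \<eta>*(u x - \<epsilon> * v x)^2) powr (p-1)"
  proof (rule key_real[OF p _ _ ux vx pos f0 ratio _ _ del])
    show "(Tu + q*Qu) * (-du) powr (p-2) \<ge> - V * u x powr (p-1)"
      using sub du by (simp add: Pu ppu q_def algebra_simps)
    show "(Tv + q*Qv) * (-dv) powr (p-2) \<le> - V * v x powr (p-1)"
      using sup dv by (simp add: Pv ppv q_def algebra_simps)
  qed (use du dv in auto)
  moreover have "(-du) - \<epsilon>*(-dv) = -c" by (simp add: c_def)
  ultimately have "plap p F x > - V * F x powr (p-1)" unfolding PF2 Fx g1_def by simp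
  moreover have "grad F x \<noteq> 0" using gFx g1c e1 by auto
  ultimately show ?thesis using ppF by simp
qed

lemma ratio_deriv:
  fixes f g :: "real \<Rightarrow> real"
  assumes df: "(f has_real_derivative du) (at r)" and dg: "(g has_real_derivative dv) (at r)"
    and gp: "g r > 0" and e: "e > 0"
    and mono: "\<And>t. r < t \<Longrightarrow> t < r + e \<Longrightarrow> f t / g t \<le> f r / g r"
  shows "(-du) * g r \<ge> (-dv) * f r"
proof -
  have D: "((\<lambda>t. f t / g t) has_real_derivative (du * g r - f r * dv) / (g r * g r)) (at r)"
    using DERIV_divide[OF df dg] gp by simp
  hence "((\<lambda>h. (f (r+h) / g (r+h) - f r / g r) / h) \<longlongrightarrow> (du * g r - f r * dv) / (g r * g r)) (at 0)"
    by (simp add: DERIV_def)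
  hence lim: "((\<lambda>h. (f (r+h) / g (r+h) - f r / g r) / h) \<longlongrightarrow> (du * g r - f r * dv) / (g r * g r)) (at_right 0)"
    by (simp add: filterlim_at_split)
  have ev: "eventually (\<lambda>h. (f (r+h) / g (r+h) - f r / g r) / h \<le> 0) (at_right 0)"
  proof -
    have "eventually (\<lambda>h. h \<in> {0<..<e}) (at_right (0::real))" using eventually_at_right_real[OF e] .
    thus ?thesis
    proof eventually_elim
      case (elim h)
      hence "f (r+h) / g (r+h) - f r / g r \<le> 0" using mono[of "r+h"] by auto
      thus ?case using elim by (simp add: divide_nonpos_pos)
    qed
  qed
  have "(du * g r - f r * dv) / (g r * g r) \<le> 0"
    by (rule tendsto_upperbound[OF lim ev]) simp
  moreover have "g r * g r > 0" using gp by simp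
  ultimately have "du * g r - f r * dv \<le> 0" by (simp add: divide_le_0_iff)
  thus ?thesis by (simp add: algebra_simps)
qed

lemma open_shell: "open {y::'a::real_normed_vector. a < norm y \<and> norm y < b}"
  by (intro open_Collect_conj open_Collect_less continuous_intros)

lemma compact_shell: "compact {y::'a::euclidean_space. a \<le> norm y \<and> norm y \<le> b}"
proof -
  have "{y::'a. a \<le> norm y \<and> norm y \<le> b} = cball 0 b \<inter> {y. a \<le> norm y}" by auto
  moreover have "closed {y::'a. a \<le> norm y}" by (intro closed_Collect_le continuous_intros)
  ultimately show ?thesis by (simp add: compact_Int_closed)
qed

lemma bounded_ratio:
  fixes f :: "'a::euclidean_space \<Rightarrow> real"
  assumes "compact K" "continuous_on K f"
  obtains B where "B \<ge> 0" "\<And>x. x \<in> K \<Longrightarrow> \<bar>f x\<bar> \<le> B"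
proof -
  have "bounded (f ` K)" using assms compact_continuous_image compact_imp_bounded by blast
  then obtain B where "\<forall>y\<in>f ` K. norm y \<le> B" by (auto simp: bounded_iff)
  hence "\<And>x. x \<in> K \<Longrightarrow> \<bar>f x\<bar> \<le> max B 0" by force
  thus ?thesis using that[of "max B 0"] by auto
qed

theorem lemma3p2:
  fixes V u v w :: "'a::euclidean_space \<Rightarrow> real"
    and \<phi>u \<phi>v :: "real \<Rightarrow> real"
    and p r0 :: real and R0 :: ereal
  assumes "DIM('a) \<ge> 2" and "p \<ge> 2" and "0 < r0" and "ereal r0 < R0"
    and "continuous_on (annulus_open r0 R0) V"
    and "\<forall>x\<in>annulus_open r0 R0. V x \<ge> 0"
    and "cond_star p r0 R0 V"
    and "subsol p r0 R0 V u" and "\<forall>x\<in>annulus_co r0 R0. u x > 0"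
    and "radial_sdec r0 R0 u \<phi>u"
    and "supersol p r0 R0 V v" and "\<forall>x\<in>annulus_co r0 R0. v x > 0"
    and "radial_sdec r0 R0 v \<phi>v"
    and "mono_smaller r0 R0 \<phi>u \<phi>v"
    and "supersol p r0 R0 V w" and "\<forall>x\<in>annulus_co r0 R0. w x > 0"
  shows "\<exists>C>0. \<forall>x\<in>annulus_co r0 R0. u x \<le> C * w x"
proof -
  note p = assms(2) and r0 = assms(3) and R0 = assms(4) and Vnn = assms(6)
  note upos = assms(9) and vpos = assms(12) and wpos = assms(16)
  obtain Uu where Uu: "annulus_co r0 R0 \<subseteq> Uu" "C2_open Uu u" using assms(8) by (auto simp: subsol_def C2_on_def)
  obtain Uv where Uv: "annulus_co r0 R0 \<subseteq> Uv" "C2_open Uv v" using assms(11) by (auto simp: supersol_def C2_on_def)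
  obtain Uw where Uw: "annulus_co r0 R0 \<subseteq> Uw" "C2_open Uw w" using assms(15) by (auto simp: supersol_def C2_on_def)
  have oUu: "open Uu" and du_U: "\<And>y. y \<in> Uu \<Longrightarrow> u differentiable (at y)"
    and dgu_U: "\<And>y. y \<in> Uu \<Longrightarrow> grad u differentiable (at y)" using Uu(2) by (auto simp: C2_open_def)
  have oUv: "open Uv" and dv_U: "\<And>y. y \<in> Uv \<Longrightarrow> v differentiable (at y)"
    and dgv_U: "\<And>y. y \<in> Uv \<Longrightarrow> grad v differentiable (at y)" using Uv(2) by (auto simp: C2_open_def)
  have oUw: "open Uw" and dw_U: "\<And>y. y \<in> Uw \<Longrightarrow> w differentiable (at y)"
    and dgw_U: "\<And>y. y \<in> Uw \<Longrightarrow> grad w differentiable (at y)" using Uw(2) by (auto simp: C2_open_def)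
  have cont: "continuous_on (annulus_co r0 R0) u" "continuous_on (annulus_co r0 R0) v"
    "continuous_on (annulus_co r0 R0) w"
    using Uu Uv Uw du_U dv_U dw_U
    by (auto intro!: continuous_at_imp_continuous_on differentiable_imp_continuous_within)
  have subu: "\<And>x. x \<in> annulus_open r0 R0 \<Longrightarrow> - plap p u x - V x * ppow p (u x) \<le> 0"
    using assms(8) by (auto simp: subsol_def)
  have supv: "\<And>x. x \<in> annulus_open r0 R0 \<Longrightarrow> - plap p v x - V x * ppow p (v x) \<ge> 0"
    using assms(11) by (auto simp: supersol_def)
  have supw: "\<And>x. x \<in> annulus_open r0 R0 \<Longrightarrow> - plap p w x - V x * ppow p (w x) \<ge> 0"
    using assms(15) by (auto simp: supersol_def)
  have radu: "\<And>x. x \<in> annulus_co r0 R0 \<Longrightarrow> u x = \<phi>u (norm x)"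
    and deru: "\<And>r. r \<in> radii r0 R0 \<Longrightarrow> \<exists>d<0. (\<phi>u has_real_derivative d) (at r within radii r0 R0)"
    using assms(10) by (auto simp: radial_sdec_def)
  have radv: "\<And>x. x \<in> annulus_co r0 R0 \<Longrightarrow> v x = \<phi>v (norm x)"
    and derv: "\<And>r. r \<in> radii r0 R0 \<Longrightarrow> \<exists>d<0. (\<phi>v has_real_derivative d) (at r within radii r0 R0)"
    using assms(13) by (auto simp: radial_sdec_def)
  obtain r1 where r1: "r1 \<in> radii r0 R0"
    and mono: "\<And>s t. s \<in> radii r0 R0 \<Longrightarrow> t \<in> radii r0 R0 \<Longrightarrow> r1 \<le> s \<Longrightarrow> s \<le> t \<Longrightarrow> \<phi>u t / \<phi>v t \<le> \<phi>u s / \<phi>v s"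
    and small: "\<phi>u \<in> o[to_R0 R0](\<phi>v)"
    using assms(14) unfolding mono_smaller_def by blast
  have r1b: "r0 \<le> r1" "ereal r1 < R0" using r1 by (auto simp: radii_def)
  have in_co: "x \<in> annulus_co r0 R0" if "r0 \<le> norm x" "norm x \<le> b" "ereal b < R0" for x :: 'a and b
  proof -
    have "ereal (norm x) \<le> ereal b" using that by simp
    hence "ereal (norm x) < R0" using that(3) by (rule le_less_trans)
    thus ?thesis using that by (auto simp: annulus_co_def)
  qed
  have in_open: "x \<in> annulus_open r0 R0" if "r0 < norm x" "norm x \<le> b" "ereal b < R0" for x :: 'a and b
  proof -
    have "ereal (norm x) \<le> ereal b" using that by simp
    hence "ereal (norm x) < R0" using that(3) by (rule le_less_trans)
    thus ?thesis using that by (auto simp: annulus_open_def)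
  qed
  have at_der: "\<exists>du<0. (\<phi> has_real_derivative du) (at r)"
    if r: "r0 < r" "ereal r < R0" and der: "\<And>r. r \<in> radii r0 R0 \<Longrightarrow> \<exists>d<0. (\<phi> has_real_derivative d) (at r within radii r0 R0)"
    for r and \<phi> :: "real \<Rightarrow> real"
  proof -
    obtain z where z: "ereal r < ereal z" "ereal z < R0" using ereal_dense2[OF r(2)] by blast
    have sub: "{r0<..<z} \<subseteq> radii r0 R0"
    proof
      fix s assume "s \<in> {r0<..<z}"
      hence "r0 \<le> s" "ereal s < ereal z" by auto
      thus "s \<in> radii r0 R0" using z(2) less_trans[of "ereal s" "ereal z" R0] by (auto simp: radii_def)
    qed
    have "r \<in> interior (radii r0 R0)"
      using interior_maximal[OF sub open_greaterThanLessThan] r z by auto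
    hence at: "at r within radii r0 R0 = at r" by (rule at_within_interior)
    have "r \<in> radii r0 R0" using r by (auto simp: radii_def)
    then obtain d where "d < 0" "(\<phi> has_real_derivative d) (at r within radii r0 R0)" using der by blast
    thus ?thesis using at by auto
  qed
  define K0 where "K0 = {y::'a. r0 \<le> norm y \<and> norm y \<le> r1}"
  have K0co: "K0 \<subseteq> annulus_co r0 R0" using in_co r1b by (auto simp: K0_def)
  have cK0: "compact K0" unfolding K0_def by (rule compact_shell)
  have cr: "continuous_on K0 (\<lambda>x. u x / w x)"
  proof -
    have "\<And>x. x \<in> K0 \<Longrightarrow> w x \<noteq> 0" using K0co wpos by force
    thus ?thesis by (intro continuous_intros continuous_on_subset[OF cont(1) K0co] continuous_on_subset[OF cont(3) K0co]) auto
  qed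
  obtain B where B: "B \<ge> 0" "\<And>x. x \<in> K0 \<Longrightarrow> \<bar>u x / w x\<bar> \<le> B"
    using bounded_ratio[OF cK0 cr] by blast
  define C1 where "C1 = B + 1"
  have C1: "C1 > 0" using B by (simp add: C1_def)
  have uK0: "u x \<le> C1 * w x" if "x \<in> K0" for x
  proof -
    have wx: "w x > 0" using wpos K0co that by auto
    have "u x / w x \<le> \<bar>u x / w x\<bar>" by (rule abs_ge_self)
    hence "u x / w x \<le> C1" using B(2)[OF that] by (simp add: C1_def del: abs_divide)
    thus ?thesis using wx by (simp add: divide_le_eq mult.commute)
  qed
  define lam where "lam = 2 * C1"
  have lam: "lam > 0" using C1 by (simp add: lam_def)
  have claim: "u x0 \<le> lam * w x0" if x0: "r1 < norm x0" "ereal (norm x0) < R0" for x0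
  proof -
    have x0co: "x0 \<in> annulus_co r0 R0" using x0 r1b in_co[of x0 "norm x0"] by auto
    have eps: "u x0 - \<epsilon> * v x0 \<le> lam * w x0" if \<epsilon>: "\<epsilon> > 0" for \<epsilon>
    proof -
      have ev1: "eventually (\<lambda>s. norm (\<phi>u s) \<le> (\<epsilon>/2) * norm (\<phi>v s)) (to_R0 R0)"
        using landau_o.smallD[OF small, of "\<epsilon>/2"] \<epsilon> by simp
      have ev2: "eventually (\<lambda>s. norm x0 < s \<and> ereal s < R0) (to_R0 R0)"
      proof (cases "R0 = \<infinity>")
        case True
        thus ?thesis by (simp add: to_R0_def eventually_gt_at_top)
      next
        case False
        then obtain R where R: "R0 = ereal R" using R0 by (cases R0) auto
        have "norm x0 < R" using x0 R by simp
        from eventually_at_left_real[OF this]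
        show ?thesis by (simp add: to_R0_def R)
      qed
      have nb: "to_R0 R0 \<noteq> bot"
        by (cases "R0 = \<infinity>") (auto simp: to_R0_def)
      obtain \<rho> where \<rho>: "norm (\<phi>u \<rho>) \<le> (\<epsilon>/2) * norm (\<phi>v \<rho>)" "norm x0 < \<rho>" "ereal \<rho> < R0"
        using eventually_happens'[OF nb eventually_conj[OF ev1 ev2]] by blast
      obtain e0 :: 'a where e0: "norm e0 = 1"
        using norm_Basis[OF SOME_Basis] by blast
      have \<rho>pos: "\<rho> > 0" using \<rho>(2) by (meson norm_ge_zero le_less_trans)
      have "(\<rho> *\<^sub>R e0) \<in> annulus_co r0 R0"
        using in_co[of "\<rho> *\<^sub>R e0" \<rho>] \<rho> \<rho>pos e0 x0 r1b by auto
      hence \<phi>vp: "\<phi>v \<rho> > 0" using vpos radv[of "\<rho> *\<^sub>R e0"] \<rho>pos e0 by auto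
      have \<rho>neg: "\<phi>u \<rho> - \<epsilon> * \<phi>v \<rho> < 0"
      proof -
        have "\<phi>u \<rho> \<le> (\<epsilon>/2) * \<phi>v \<rho>" using \<rho>(1) \<phi>vp by auto
        moreover have "\<epsilon> * \<phi>v \<rho> > 0" using \<phi>vp \<epsilon> by simp
        ultimately show ?thesis by linarith
      qed
      define K where "K = {y::'a. r1 \<le> norm y \<and> norm y \<le> \<rho>}"
      have Kco: "K \<subseteq> annulus_co r0 R0" using in_co \<rho> r1b by (auto simp: K_def)
      have x0K: "x0 \<in> K" using x0 \<rho> by (auto simp: K_def)
      have cK: "compact K" unfolding K_def by (rule compact_shell)
      have cwK: "continuous_on K w" by (rule continuous_on_subset[OF cont(3) Kco])
      have cuK: "continuous_on K u" by (rule continuous_on_subset[OF cont(1) Kco])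
      have cvK: "continuous_on K v" by (rule continuous_on_subset[OF cont(2) Kco])
      obtain xm where xm: "xm \<in> K" "\<And>y. y \<in> K \<Longrightarrow> w xm \<le> w y"
        using continuous_attains_inf[OF cK _ cwK] x0K by blast
      define m where "m = w xm"
      have m: "m > 0" using wpos Kco xm by (auto simp: m_def)
      have cf: "continuous_on K (\<lambda>y. u y - \<epsilon> * v y)" using cuK cvK by (intro continuous_intros)
      obtain M where M: "M \<ge> 0" "\<And>y. y \<in> K \<Longrightarrow> \<bar>u y - \<epsilon> * v y\<bar> \<le> M"
        using bounded_ratio[OF cK cf] by blast
      define \<delta> where "\<delta> = lam * m / 4"
      define \<eta> where "\<eta> = \<delta> / (M^2 + 1)"
      have \<delta>: "\<delta> > 0" using lam m by (simp add: \<delta>_def)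
      have \<eta>: "\<eta> > 0" using \<delta> by (simp add: \<eta>_def add_nonneg_pos)
      have \<eta>f: "\<eta> * (u y - \<epsilon> * v y)^2 \<le> \<delta>" if "y \<in> K" for y
      proof -
        have "(u y - \<epsilon> * v y)^2 \<le> M^2" using M(2)[OF that]
          by (metis abs_le_square_iff abs_of_nonneg M(1))
        hence "\<eta> * (u y - \<epsilon> * v y)^2 \<le> \<eta> * M^2" using \<eta> by (simp add: mult_left_mono)
        also have "\<eta> * M^2 \<le> \<delta>"
        proof -
          have den: "M^2 + 1 > 0" by (simp add: add_nonneg_pos)
          have "\<delta> * M^2 \<le> \<delta> * (M^2 + 1)" using \<delta> by (intro mult_left_mono) auto
          hence "\<delta> * M^2 / (M^2 + 1) \<le> \<delta>" using den by (simp add: divide_le_eq)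
          thus ?thesis by (simp add: \<eta>_def)
        qed
        finally show ?thesis .
      qed
      define F where "F = (\<lambda>y. (u y - \<epsilon> * v y) + \<delta> + \<eta> * (u y - \<epsilon> * v y)^2)"
      have Fup: "F y \<le> (u y - \<epsilon> * v y) + 2 * \<delta>" if "y \<in> K" for y
        using \<eta>f[OF that] by (simp add: F_def)
      have Flow: "u y - \<epsilon> * v y \<le> F y" for y
      proof -
        have "\<eta> * (u y - \<epsilon> * v y)^2 \<ge> 0" using \<eta> by simp
        thus ?thesis using \<delta> by (simp add: F_def)
      qed
      have cFK: "continuous_on K (\<lambda>y. F y / w y)"
      proof -
        have "\<And>x. x \<in> K \<Longrightarrow> w x \<noteq> 0" using Kco wpos by force
        thus ?thesis unfolding F_def using cuK cvK cwK by (intro continuous_intros) auto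
      qed
      obtain xs where xs: "xs \<in> K" "\<And>y. y \<in> K \<Longrightarrow> F y / w y \<le> F xs / w xs"
        using continuous_attains_sup[OF cK _ cFK] x0K by blast
      define T where "T = F xs / w xs"
      have wxs: "w xs > 0" using wpos Kco xs by auto
      have FxsT: "F xs = T * w xs" using wxs by (simp add: T_def)
      have Tle: "T \<le> lam"
      proof (rule ccontr)
        assume "\<not> T \<le> lam" hence Tl: "T > lam" by simp
        have big: "F xs > lam * w xs" using Tl wxs FxsT by (simp add: mult_strict_right_mono)
        have wm: "w xs \<ge> m" using xm xs by (simp add: m_def)
        have nxs: "r1 \<le> norm xs" "norm xs \<le> \<rho>" using xs by (auto simp: K_def)
        consider "norm xs = r1" | "norm xs = \<rho>" | "r1 < norm xs \<and> norm xs < \<rho>" using nxs by linarith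
        then show False
        proof cases
          case 1
          have "xs \<in> K0" using 1 r1b by (auto simp: K0_def)
          hence "u xs \<le> C1 * w xs" by (rule uK0)
          moreover have "\<epsilon> * v xs > 0" using \<epsilon> vpos Kco xs by auto
          moreover have "2 * \<delta> \<le> C1 * w xs" using wm C1 by (simp add: \<delta>_def lam_def mult_left_mono)
          ultimately have "F xs \<le> lam * w xs" using Fup[OF xs(1)] by (simp add: lam_def)
          thus False using big by simp
        next
          case 2
          have "u xs - \<epsilon> * v xs < 0" using 2 radu radv Kco xs \<rho>neg by auto
          hence "F xs < 2 * \<delta>" using Fup[OF xs(1)] by simp
          moreover have "2 * \<delta> \<le> lam * w xs" using wm lam m
            by (simp add: \<delta>_def)
          ultimately show False using big by simp
        next
          case 3
          define S where "S = {y::'a. r1 < norm y \<and> norm y < \<rho>} \<inter> Uu \<inter> Uv \<inter> Uw"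
          have SK: "S \<subseteq> K" by (auto simp: S_def K_def)
          have Sco: "S \<subseteq> annulus_co r0 R0" using SK Kco by auto
          have oS: "open S" unfolding S_def by (intro open_Int open_shell oUu oUv oUw)
          have xsS: "xs \<in> S" using 3 xs Kco Uu Uv Uw by (auto simp: S_def)
          have xsU: "xs \<in> Uu" "xs \<in> Uv" "xs \<in> Uw" using xsS by (auto simp: S_def)
          have le: "F y \<le> T * w y" if "y \<in> S" for y
          proof -
            have "y \<in> K" using that SK by auto
            hence "F y / w y \<le> T" using xs(2) by (simp add: T_def)
            moreover have "w y > 0" using wpos Sco that by auto
            ultimately show ?thesis by (simp add: divide_le_eq)
          qed
          have f0: "u xs - \<epsilon> * v xs > 0"
          proof -
            have "lam * w xs \<ge> lam * m" using wm lam by simp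
            hence "F xs > 4 * \<delta>" using big by (simp add: \<delta>_def)
            thus ?thesis using Fup[OF xs(1)] \<delta> by linarith
          qed
          have r0xs: "r0 < norm xs" using 3 r1b by linarith
          have xs0: "xs \<noteq> 0" using r0xs r0 by auto
          have xsopen: "xs \<in> annulus_open r0 R0" using in_open[of xs \<rho>] r0xs 3 \<rho> by auto
          have nR: "ereal (norm xs) < R0" using xsopen by (simp add: annulus_open_def)
          obtain du where du: "du < 0" "(\<phi>u has_real_derivative du) (at (norm xs))"
            using at_der[OF r0xs nR deru] by blast
          obtain dv where dv: "dv < 0" "(\<phi>v has_real_derivative dv) (at (norm xs))"
            using at_der[OF r0xs nR derv] by blast
          define S' where "S' = {y::'a. r1 < norm y \<and> norm y < \<rho>}"
          have S'co: "S' \<subseteq> annulus_co r0 R0" using Kco by (auto simp: S'_def K_def)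
          have xsS': "xs \<in> S'" using 3 by (simp add: S'_def)
          have oS': "open S'" unfolding S'_def by (rule open_shell)
          have gu: "grad u xs = du *\<^sub>R sgn xs"
            by (rule grad_radial(1)[OF xs0 oS' xsS' _ du(2)])
               (use radu S'co in auto)
          have gv: "grad v xs = dv *\<^sub>R sgn xs"
            by (rule grad_radial(1)[OF xs0 oS' xsS' _ dv(2)])
               (use radv S'co in auto)
          have uxs: "u xs = \<phi>u (norm xs)" and vxs: "v xs = \<phi>v (norm xs)" using radu radv Kco xs by auto
          have uxp: "u xs > 0" and vxp: "v xs > 0" using upos vpos Kco xs by auto
          have ratio: "(-du) * v xs \<ge> (-dv) * u xs"
          proof -
            have "(-du) * \<phi>v (norm xs) \<ge> (-dv) * \<phi>u (norm xs)"
            proof (rule ratio_deriv[OF du(2) dv(2)])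
              show "\<phi>v (norm xs) > 0" using vxp vxs by simp
              show "\<rho> - norm xs > 0" using 3 by simp
              fix t assume t: "norm xs < t" "t < norm xs + (\<rho> - norm xs)"
              have "t \<in> radii r0 R0"
              proof -
                have "ereal t \<le> ereal \<rho>" using t by simp
                hence "ereal t < R0" using \<rho>(3) by (rule le_less_trans)
                thus ?thesis using t r0xs by (auto simp: radii_def)
              qed
              moreover have "norm xs \<in> radii r0 R0" using r0xs nR by (simp add: radii_def)
              ultimately show "\<phi>u t / \<phi>v t \<le> \<phi>u (norm xs) / \<phi>v (norm xs)"
                using mono t 3 by auto
            qed
            thus ?thesis using uxs vxs by simp
          qed
          have hu: "(grad u has_derivative frechet_derivative (grad u) (at xs)) (at xs)"
            using dgu_U[OF xsU(1)] frechet_derivative_works by blast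
          have hv: "(grad v has_derivative frechet_derivative (grad v) (at xs)) (at xs)"
            using dgv_U[OF xsU(2)] frechet_derivative_works by blast
          have hw: "(grad w has_derivative frechet_derivative (grad w) (at xs)) (at xs)"
            using dgw_U[OF xsU(3)] frechet_derivative_works by blast
          have diffuS: "\<And>y. y \<in> S \<Longrightarrow> u differentiable (at y)" using du_U by (auto simp: S_def)
          have diffvS: "\<And>y. y \<in> S \<Longrightarrow> v differentiable (at y)" using dv_U by (auto simp: S_def)
          have diffwS: "\<And>y. y \<in> S \<Longrightarrow> w differentiable (at y)" using dw_U by (auto simp: S_def)
          have Vx: "V xs \<ge> 0" using Vnn xsopen by auto
          have del: "\<delta> \<ge> \<eta> * (u xs - \<epsilon> * v xs)^2" using \<eta>f[OF xs(1)] .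
          have strict: "plap p F xs > - V xs * ppow p (F xs) \<and> grad F xs \<noteq> 0"
            unfolding F_def
            by (rule strict_F[OF p oS xsS xs0 diffuS diffvS hu hv gu gv du(1) dv(1) uxp vxp \<epsilon> \<eta> Vx f0 ratio
                   subu[OF xsopen] supv[OF xsopen] del])
          note GF0 = grad_F[where S=S and x=xs and u=u and v=v and \<epsilon>=\<epsilon> and \<delta>=\<delta> and \<eta>=\<eta>
                 and Hu="frechet_derivative (grad u) (at xs)" and Hv="frechet_derivative (grad v) (at xs)"]
          have dFS: "\<And>y. y \<in> S \<Longrightarrow> F differentiable (at y)"
            unfolding F_def using GF0(1) oS xsS diffuS diffvS hu hv by blast
          obtain HF where hF: "(grad F has_derivative HF) (at xs)"
            unfolding F_def using GF0(3) oS xsS diffuS diffvS hu hv by blast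
          have Tpos: "T > 0" using Tl lam by simp
          have touch: "plap p F xs \<le> T powr (p-1) * plap p w xs"
          proof (rule plap_touch[OF oS xsS le FxsT dFS diffwS hF hw p Tpos])
            from strict show "grad F xs \<noteq> 0" by (rule conjunct2)
          qed
          have pw: "plap p w xs \<le> - V xs * ppow p (w xs)" using supw[OF xsopen] by simp
          have "T powr (p-1) * plap p w xs \<le> T powr (p-1) * (- V xs * ppow p (w xs))"
            using pw by (intro mult_left_mono) auto
          also have "T powr (p-1) * (- V xs * ppow p (w xs)) = - V xs * ppow p (F xs)"
          proof -
            have "ppow p (w xs) = w xs powr (p-1)" using wxs by (simp add: ppow_def powr_m2_mult)
            moreover have "F xs > 0" using FxsT Tpos wxs by simp
            hence "ppow p (F xs) = F xs powr (p-1)" by (simp add: ppow_def powr_m2_mult)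
            ultimately show ?thesis using FxsT Tpos wxs by (simp add: powr_mult)
          qed
          finally show False using touch strict by simp
        qed
      qed
      have "F x0 / w x0 \<le> lam" using xs(2)[OF x0K] Tle by (simp add: T_def)
      moreover have "w x0 > 0" using wpos x0co by simp
      ultimately have "F x0 \<le> lam * w x0" by (simp add: divide_le_eq mult.commute)
      thus ?thesis using Flow[of x0] by simp
    qed
    show ?thesis
    proof (rule ccontr)
      assume "\<not> u x0 \<le> lam * w x0"
      hence gt: "u x0 > lam * w x0" by simp
      have vx0: "v x0 > 0" using vpos x0co by simp
      define \<epsilon> where "\<epsilon> = (u x0 - lam * w x0) / (2 * v x0)"
      have "\<epsilon> > 0" using gt vx0 by (simp add: \<epsilon>_def)
      from eps[OF this] have A: "u x0 - \<epsilon> * v x0 \<le> lam * w x0" .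
      have B: "\<epsilon> * v x0 = (u x0 - lam * w x0) / 2" using vx0 by (simp add: \<epsilon>_def)
      have "u x0 - (u x0 - lam * w x0) / 2 \<le> lam * w x0" using A B by simp
      hence "u x0 \<le> lam * w x0" by (simp add: field_simps)
      thus False using gt by simp
    qed
  qed
  show ?thesis
  proof (intro exI[of _ lam] conjI ballI)
    show "lam > 0" by (rule lam)
    fix x :: 'a assume x: "x \<in> annulus_co r0 R0"
    show "u x \<le> lam * w x"
    proof (cases "norm x \<le> r1")
      case True
      hence "x \<in> K0" using x by (auto simp: K0_def annulus_co_def)
      hence "u x \<le> C1 * w x" by (rule uK0)
      moreover have "C1 * w x \<le> lam * w x" using wpos x C1 by (simp add: lam_def)
      ultimately show ?thesis by simp
    next
      case False
      thus ?thesis using claim x by (auto simp: annulus_co_def)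
    qed
  qed
qed

end
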